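(* Let $G=K\rtimes H$ be a Frobenius group with kernel $K$ such that the cardinality of the Frobenius complements is different from $|K|-1$. There is an absolute constant $c>0$ such that for every $0<\varepsilon\le 1/2$ and every $\ell$ with $c\log|K|\log(1/\varepsilon)\le\ell\le|K|$, a uniformly random subset $B\subseteq K$ of size $\ell$ is an $\mathcal{FC}$-strong base (for the action $\circ$) with probability at least $1-\varepsilon$.
   Context: A Frobenius group is a finite group $G$ acting transitively on a finite set such that only the identity has more than one fixed point and some nontrivial element fixes a point; its kernel $K$ (identity plus fixed-point-free elements) is normal, and a Frobenius complement $H$ (a point stabilizer) satisfies $K\cap H=\{1\}$, $G=KH$. The action $\circ$ of $G$ on $K$: for $g=yh$ with $y\in K,h\in H$, $g\circ x=yhxh^{-1}$. $\mathcal{FC}$ is the family of Frobenius complements $\{xHx^{-1}:x\in K\}$ (the stabilizers of the points of $K$). $G_m$ is the stabilizer of $m\in K$. A set $B\subseteq K$ is an $H'$-strong base if $\bigcap_{m\in B}H'G_{g\circ m}=H'$ for every $g\in G$, and an $\mathcal{FC}$-strong base if it is $H'$-strong for every $H'\in\mathcal{FC}$. *)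

theory Defs
  imports "HOL-Algebra.Group_Action" "HOL-Analysis.Analysis"
begin

definition frobenius_action :: "('g, 'm) monoid_scheme \<Rightarrow> 'e set \<Rightarrow> ('g \<Rightarrow> 'e \<Rightarrow> 'e) \<Rightarrow> bool" where
  "frobenius_action G E \<phi> \<longleftrightarrow>
     group G \<and> finite (carrier G) \<and> finite E \<and> E \<noteq> {} \<and>
     transitive_action G E \<phi> \<and>
     (\<forall>g\<in>carrier G. g \<noteq> \<one>\<^bsub>G\<^esub> \<longrightarrow> card (invariants E \<phi> g) \<le> 1) \<and>
     (\<exists>g\<in>carrier G. g \<noteq> \<one>\<^bsub>G\<^esub> \<and> invariants E \<phi> g \<noteq> {})"

definition frobenius_kernel :: "('g, 'm) monoid_scheme \<Rightarrow> 'e set \<Rightarrow> ('g \<Rightarrow> 'e \<Rightarrow> 'e) \<Rightarrow> 'g set" where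
  "frobenius_kernel G E \<phi> = {\<one>\<^bsub>G\<^esub>} \<union> {g \<in> carrier G. invariants E \<phi> g = {}}"

text \<open>The action of G on K: for g = y h with y in K and h in H, g acts by x maps to y h x h^-1.\<close>
definition frob_circ :: "('g, 'm) monoid_scheme \<Rightarrow> 'g set \<Rightarrow> 'g set \<Rightarrow> 'g \<Rightarrow> 'g \<Rightarrow> 'g" where
  "frob_circ G K H g x =
     (let p = (THE p. fst p \<in> K \<and> snd p \<in> H \<and> g = fst p \<otimes>\<^bsub>G\<^esub> snd p)
      in fst p \<otimes>\<^bsub>G\<^esub> snd p \<otimes>\<^bsub>G\<^esub> x \<otimes>\<^bsub>G\<^esub> inv\<^bsub>G\<^esub> (snd p))"

definition frob_stab :: "('g, 'm) monoid_scheme \<Rightarrow> 'g set \<Rightarrow> 'g set \<Rightarrow> 'g \<Rightarrow> 'g set" where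
  "frob_stab G K H m = {g \<in> carrier G. frob_circ G K H g m = m}"

definition frob_FC :: "('g, 'm) monoid_scheme \<Rightarrow> 'g set \<Rightarrow> 'g set \<Rightarrow> 'g set set" where
  "frob_FC G K H = {(\<lambda>h. x \<otimes>\<^bsub>G\<^esub> h \<otimes>\<^bsub>G\<^esub> inv\<^bsub>G\<^esub> x) ` H | x. x \<in> K}"

text \<open>H'-strong base (intersection taken inside carrier G, so the empty intersection is G).\<close>
definition strong_base :: "('g, 'm) monoid_scheme \<Rightarrow> 'g set \<Rightarrow> 'g set \<Rightarrow> 'g set \<Rightarrow> 'g set \<Rightarrow> bool" where
  "strong_base G K H H' B \<longleftrightarrow>
     (\<forall>g\<in>carrier G. carrier G \<inter> (\<Inter>m\<in>B. H' <#>\<^bsub>G\<^esub> frob_stab G K H (frob_circ G K H g m)) = H')"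

definition FC_strong_base :: "('g, 'm) monoid_scheme \<Rightarrow> 'g set \<Rightarrow> 'g set \<Rightarrow> 'g set \<Rightarrow> bool" where
  "FC_strong_base G K H B \<longleftrightarrow> (\<forall>H'\<in>frob_FC G K H. strong_base G K H H' B)"

end

theory Submission imports Defs begin

lemma binom_half:
  assumes "2 * m \<le> (n::nat)"
  shows "2 ^ l * (m choose l) \<le> n choose l"
proof (induction l)
  case 0 then show ?case by simp
next
  case (Suc l)
  have a: "Suc l * (m choose Suc l) = (m - l) * (m choose l)"
    using binomial_absorption[of l m] binomial_absorb_comp[of m l] by simp
  have b: "Suc l * (n choose Suc l) = (n - l) * (n choose l)"
    using binomial_absorption[of l n] binomial_absorb_comp[of n l] by simp
  have d: "2 * (m - l) \<le> n - l" using assms by linarith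
  have "Suc l * (2 ^ Suc l * (m choose Suc l)) = 2 * 2^l * (Suc l * (m choose Suc l))"
    by (simp only: power_Suc mult_ac)
  also have "\<dots> = 2 * 2^l * ((m - l) * (m choose l))" by (simp only: a)
  also have "\<dots> = 2 * (m - l) * (2 ^ l * (m choose l))" by (simp add: mult_ac)
  also have "\<dots> \<le> 2 * (m - l) * (n choose l)" using Suc.IH by simp
  also have "\<dots> \<le> (n - l) * (n choose l)" using d by (simp add: mult_right_mono)
  also have "\<dots> = Suc l * (n choose Suc l)" using b by simp
  finally show ?case by (simp only: mult_le_cancel1)
qed

lemma ln2_half: "ln (2::real) \<ge> 1/2"
  by (smt (verit, ccfv_SIG) ln_add1_ge)

lemma final_ineq:
  fixes n l :: nat and \<epsilon> :: real
  assumes n: "n \<ge> 2" and e: "0 < \<epsilon>" "\<epsilon> \<le> 1/2"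
    and l: "40 * ln (real n) * ln (1/\<epsilon>) \<le> real l"
  shows "real n ^ 5 \<le> \<epsilon> * 2 ^ l"
proof -
  define A where "A = ln (real n)"
  define L where "L = ln (1/\<epsilon>)"
  have "ln 2 \<le> ln (real n)" using n by simp
  hence A: "A \<ge> 1/2" unfolding A_def using ln2_half by linarith
  have "1/\<epsilon> \<ge> 2" using e by (simp add: field_simps)
  hence L: "L \<ge> 1/2" unfolding L_def using ln2_half
    by (smt (verit) ln_le_cancel_iff)
  have AL: "A * L \<ge> (A + L) / 4"
  proof -
    have "A * (1/2) \<le> A * L" by (rule mult_left_mono) (use A L in auto)
    moreover have "(1/2) * L \<le> A * L" by (rule mult_right_mono) (use A L in auto)
    ultimately show ?thesis by simp
  qed
  have "real l * (1/2) \<le> real l * ln 2" by (rule mult_left_mono) (use ln2_half in auto)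
  moreover have "real l \<ge> 40 * (A * L)" using l unfolding A_def L_def by (simp add: mult.assoc)
  ultimately have k1: "real l * ln 2 \<ge> 20 * (A * L)" by linarith
  have k2: "20 * (A * L) \<ge> 5 * A + L" using AL A L by (simp add: field_simps)
  have key: "real l * ln 2 \<ge> 5 * A + L" using k1 k2 by linarith
  have "ln (real n ^ 5) = 5 * A" unfolding A_def using n by (simp add: ln_realpow)
  also have "\<dots> \<le> ln \<epsilon> + real l * ln 2" using key e unfolding L_def by (simp add: ln_div)
  also have "\<dots> = ln (\<epsilon> * 2 ^ l)" using e by (simp add: ln_mult ln_realpow)
  finally show ?thesis using n e by (simp add: ln_le_cancel_iff)
qed

locale frob = group G for G (structure) +
  fixes E :: "'e set" and \<phi> and \<omega> and K H
  assumes fin: "finite (carrier G)" and finE: "finite E"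
    and act: "group_action G E \<phi>"
    and om: "\<omega> \<in> E"
    and Hdef: "H = stabilizer G \<phi> \<omega>"
    and Kdef: "K = frobenius_kernel G E \<phi>"
    and Knorm: "K \<lhd> G" and KH1: "K \<inter> H = {\<one>}" and KH: "K <#> H = carrier G"
    and fix1: "\<forall>g\<in>carrier G. g \<noteq> \<one> \<longrightarrow> card (invariants E \<phi> g) \<le> 1"
begin

lemma Hsub: "subgroup H G"
  unfolding Hdef by (rule group_action.stabilizer_subgroup[OF act om])

lemma Ksub: "subgroup K G"
  by (rule normal_imp_subgroup[OF Knorm])

lemma H_car: "h \<in> H \<Longrightarrow> h \<in> carrier G"
  by (rule subgroup.mem_carrier[OF Hsub])

lemma K_car: "k \<in> K \<Longrightarrow> k \<in> carrier G"
  by (rule subgroup.mem_carrier[OF Ksub])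

lemma Kmul: "a \<in> K \<Longrightarrow> b \<in> K \<Longrightarrow> a \<otimes> b \<in> K" by (rule subgroup.m_closed[OF Ksub])
lemma Kinv: "a \<in> K \<Longrightarrow> inv a \<in> K" by (rule subgroup.m_inv_closed[OF Ksub])
lemma Hmul: "a \<in> H \<Longrightarrow> b \<in> H \<Longrightarrow> a \<otimes> b \<in> H" by (rule subgroup.m_closed[OF Hsub])
lemma Hinv: "a \<in> H \<Longrightarrow> inv a \<in> H" by (rule subgroup.m_inv_closed[OF Hsub])

lemma comm_false:
  assumes h: "h \<in> H" and k: "k \<in> K" and h1: "h \<noteq> \<one>" and k1: "k \<noteq> \<one>"
    and c: "h \<otimes> k = k \<otimes> h"
  shows False
proof -
  have hc: "h \<in> carrier G" using H_car h .
  have kc: "k \<in> carrier G" using K_car k .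
  have kinv: "invariants E \<phi> k = {}" using k k1 Kdef unfolding frobenius_kernel_def by auto
  have hw: "\<phi> h \<omega> = \<omega>" using h Hdef unfolding stabilizer_def by auto
  have kwE: "\<phi> k \<omega> \<in> E" using group_action.element_image[OF act kc om] by simp
  have kw: "\<phi> k \<omega> \<noteq> \<omega>" using kinv om unfolding invariants_def by auto
  have "\<phi> h (\<phi> k \<omega>) = \<phi> (h \<otimes> k) \<omega>"
    using group_action.composition_rule[OF act om hc kc] by simp
  also have "\<dots> = \<phi> (k \<otimes> h) \<omega>" using c by simp
  also have "\<dots> = \<phi> k \<omega>"
    using group_action.composition_rule[OF act om kc hc] hw by simp
  finally have "{\<omega>, \<phi> k \<omega>} \<subseteq> invariants E \<phi> h"
    using hw om kwE unfolding invariants_def by auto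
  hence "card {\<omega>, \<phi> k \<omega>} \<le> card (invariants E \<phi> h)"
    by (intro card_mono) (simp_all add: invariants_def finE)
  moreover have "card {\<omega>, \<phi> k \<omega>} = 2" using kw by simp
  moreover have "card (invariants E \<phi> h) \<le> 1" using fix1 hc h1 by blast
  ultimately show False by linarith
qed

lemma decomp: assumes "g \<in> carrier G" shows "\<exists>y\<in>K. \<exists>h\<in>H. g = y \<otimes> h"
proof -
  have "g \<in> K <#> H" using assms KH by simp
  thus ?thesis unfolding set_mult_def by blast
qed

lemma dec_unique:
  assumes "y \<in> K" "h \<in> H" "y' \<in> K" "h' \<in> H" "y \<otimes> h = y' \<otimes> h'"
  shows "y = y' \<and> h = h'"
proof -
  have c: "y \<in> carrier G" "h \<in> carrier G" "y' \<in> carrier G" "h' \<in> carrier G"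
    using assms K_car H_car by auto
  have "inv y' \<otimes> (y \<otimes> h) = h'"
    using inv_solve_left'[of h' y' "y \<otimes> h"] c assms(5) by simp
  hence 1: "inv y' \<otimes> y \<otimes> h = h'" using c by (simp add: m_assoc)
  have 2: "inv y' \<otimes> y = h' \<otimes> inv h"
    using inv_solve_right[of "inv y' \<otimes> y" h' h] c 1 by simp
  have "inv y' \<otimes> y \<in> K" using assms by (simp add: Kmul Kinv)
  moreover have "h' \<otimes> inv h \<in> H" using assms by (simp add: Hmul Hinv)
  ultimately have d: "inv y' \<otimes> y = \<one>" using KH1 2 by auto
  hence "y = y'" using inv_solve_left'[of \<one> y' y] c by simp
  moreover have "h' = h" using 1 d c by simp
  ultimately show ?thesis by simp
qed

lemma circ_eq:
  assumes "y \<in> K" "h \<in> H"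
  shows "frob_circ G K H (y \<otimes> h) x = y \<otimes> h \<otimes> x \<otimes> inv h"
proof -
  have P: "fst (y,h) \<in> K \<and> snd (y,h) \<in> H \<and> y \<otimes> h = fst (y,h) \<otimes> snd (y,h)" using assms by simp
  have U: "p = (y,h)" if a: "fst p \<in> K \<and> snd p \<in> H \<and> y \<otimes> h = fst p \<otimes> snd p" for p
  proof -
    have "y = fst p \<and> h = snd p" using dec_unique[of y h "fst p" "snd p"] assms a by simp
    thus "p = (y,h)" by (simp add: prod_eq_iff)
  qed
  have the: "(THE p. fst p \<in> K \<and> snd p \<in> H \<and> y \<otimes> h = fst p \<otimes> snd p) = (y, h)"
    by (rule the_equality[of "\<lambda>p. fst p \<in> K \<and> snd p \<in> H \<and> y \<otimes> h = fst p \<otimes> snd p", OF P U])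
  show ?thesis unfolding frob_circ_def Let_def the by simp
qed

lemma one_K: "\<one> \<in> K" by (rule subgroup.one_closed[OF Ksub])
lemma one_H: "\<one> \<in> H" by (rule subgroup.one_closed[OF Hsub])

lemma lcan: "x \<in> carrier G \<Longrightarrow> y \<in> carrier G \<Longrightarrow> z \<in> carrier G \<Longrightarrow> (x \<otimes> y = x \<otimes> z) = (y = z)"
  by (simp add: Units_eq)

lemma r_inv_assoc: "h \<in> carrier G \<Longrightarrow> z \<in> carrier G \<Longrightarrow> h \<otimes> (inv h \<otimes> z) = z"
  by (simp add: m_assoc[symmetric])

lemma l_inv_assoc: "h \<in> carrier G \<Longrightarrow> z \<in> carrier G \<Longrightarrow> inv h \<otimes> (h \<otimes> z) = z"
  by (simp add: m_assoc[symmetric])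

lemma conj_mult: "a \<in> carrier G \<Longrightarrow> b \<in> carrier G \<Longrightarrow> h \<in> carrier G \<Longrightarrow>
   h \<otimes> (a \<otimes> b) \<otimes> inv h = (h \<otimes> a \<otimes> inv h) \<otimes> (h \<otimes> b \<otimes> inv h)"
  by (simp add: m_assoc l_inv_assoc)

lemma conj_inv: "a \<in> carrier G \<Longrightarrow> h \<in> carrier G \<Longrightarrow>
   h \<otimes> inv a \<otimes> inv h = inv (h \<otimes> a \<otimes> inv h)"
  by (simp add: inv_mult_group m_assoc)

lemma circ_K: assumes "g \<in> carrier G" "x \<in> K" shows "frob_circ G K H g x \<in> K"
proof -
  obtain y h where yh: "y \<in> K" "h \<in> H" "g = y \<otimes> h" using decomp assms(1) by blast
  have c: "y \<in> carrier G" "h \<in> carrier G" "x \<in> carrier G" using yh assms K_car H_car by auto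
  have "h \<otimes> x \<otimes> inv h \<in> K" using normal.inv_op_closed2[OF Knorm] c assms by simp
  hence "y \<otimes> (h \<otimes> x \<otimes> inv h) \<in> K" using yh by (simp add: Kmul)
  thus ?thesis using circ_eq yh c by (simp add: m_assoc)
qed

lemma circ_inj: assumes "g \<in> carrier G" "x \<in> K" "x' \<in> K"
  and "frob_circ G K H g x = frob_circ G K H g x'" shows "x = x'"
proof -
  obtain y h where yh: "y \<in> K" "h \<in> H" "g = y \<otimes> h" using decomp assms(1) by blast
  have c: "y \<in> carrier G" "h \<in> carrier G" "x \<in> carrier G" "x' \<in> carrier G" using yh assms K_car H_car by auto
  have "y \<otimes> h \<otimes> x \<otimes> inv h = y \<otimes> h \<otimes> x' \<otimes> inv h" using assms(4) circ_eq yh by simp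
  thus ?thesis using c by (simp add: lcan)
qed

lemma circ_one: "x \<in> K \<Longrightarrow> frob_circ G K H \<one> x = x"
  using circ_eq[OF one_K one_H, of x] K_car by simp

lemma fix_unique:
  assumes s: "s \<in> carrier G" "s \<noteq> \<one>" and x: "x \<in> K" "x' \<in> K"
    and f: "frob_circ G K H s x = x" "frob_circ G K H s x' = x'"
  shows "x = x'"
proof (rule ccontr)
  assume ne: "x \<noteq> x'"
  obtain y h where yh: "y \<in> K" "h \<in> H" "s = y \<otimes> h" using decomp s by blast
  have c: "y \<in> carrier G" "h \<in> carrier G" "x \<in> carrier G" "x' \<in> carrier G"
    using yh x K_car H_car by auto
  have e1: "y \<otimes> (h \<otimes> x \<otimes> inv h) = x" using f(1) circ_eq yh c by (simp add: m_assoc)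
  have e2: "y \<otimes> (h \<otimes> x' \<otimes> inv h) = x'" using f(2) circ_eq yh c by (simp add: m_assoc)
  have h1: "h \<noteq> \<one>"
  proof
    assume "h = \<one>"
    hence "y \<otimes> x = x" using e1 c by simp
    hence "y = \<one>" using c by simp
    thus False using s yh \<open>h = \<one>\<close> by simp
  qed
  have c1: "h \<otimes> x \<otimes> inv h = inv y \<otimes> x" using inv_solve_left[of "h \<otimes> x \<otimes> inv h" y x] e1 c by simp
  have c2: "h \<otimes> x' \<otimes> inv h = inv y \<otimes> x'" using inv_solve_left[of "h \<otimes> x' \<otimes> inv h" y x'] e2 c by simp
  have "h \<otimes> (inv x \<otimes> x') \<otimes> inv h = (h \<otimes> inv x \<otimes> inv h) \<otimes> (h \<otimes> x' \<otimes> inv h)"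
    using conj_mult c by simp
  also have "\<dots> = inv (inv y \<otimes> x) \<otimes> (inv y \<otimes> x')" using conj_inv c c1 c2 by simp
  also have "\<dots> = inv x \<otimes> x'" using c by (simp add: inv_mult_group m_assoc l_inv_assoc r_inv_assoc)
  finally have k: "h \<otimes> (inv x \<otimes> x') \<otimes> inv h = inv x \<otimes> x'" .
  have kc: "inv x \<otimes> x' \<in> carrier G" using c by simp
  have comm: "h \<otimes> (inv x \<otimes> x') = (inv x \<otimes> x') \<otimes> h"
    using inv_solve_right'[of "inv x \<otimes> x'" "h \<otimes> (inv x \<otimes> x')" h] k kc c by simp
  have kK: "inv x \<otimes> x' \<in> K" using x by (simp add: Kmul Kinv)
  have k1: "inv x \<otimes> x' \<noteq> \<one>"
  proof
    assume "inv x \<otimes> x' = \<one>"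
    hence "x' = x \<otimes> \<one>" using inv_solve_left'[of \<one> x x'] c by simp
    thus False using ne c by simp
  qed
  show False using comm_false[OF yh(2) kK h1 k1 comm] .
qed

lemma finH: "finite H" by (rule finite_subset[OF subsetI[OF H_car] fin])
lemma finK: "finite K" by (rule finite_subset[OF subsetI[OF K_car] fin])

lemma stab_one: "z \<in> K \<Longrightarrow> \<one> \<in> frob_stab G K H z"
  unfolding frob_stab_def using circ_one by simp

lemma FC_props:
  assumes "H' \<in> frob_FC G K H"
  shows "H' \<subseteq> carrier G" "card H' \<le> card H" "finite H'"
proof -
  obtain x where x: "x \<in> K" "H' = (\<lambda>h. x \<otimes> h \<otimes> inv x) ` H"
    using assms unfolding frob_FC_def by blast
  show "H' \<subseteq> carrier G" using x K_car H_car by auto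
  show "card H' \<le> card H" using x card_image_le finH by simp
  show "finite H'" using x finH by simp
qed

lemma T_card:
  assumes H': "H' \<in> frob_FC G K H" and g: "g \<in> carrier G" and a: "a \<in> carrier G" "a \<notin> H'"
  shows "card {m \<in> K. a \<in> H' <#> frob_stab G K H (frob_circ G K H g m)} \<le> card H"
proof -
  define T where "T = {m \<in> K. a \<in> H' <#> frob_stab G K H (frob_circ G K H g m)}"
  define f where "f m = (SOME h'. h' \<in> H' \<and> inv h' \<otimes> a \<in> frob_stab G K H (frob_circ G K H g m))" for m
  have Hc: "H' \<subseteq> carrier G" using FC_props H' by auto
  have fm: "f m \<in> H' \<and> inv (f m) \<otimes> a \<in> frob_stab G K H (frob_circ G K H g m)" if "m \<in> T" for m
  proof -
    from that have "a \<in> H' <#> frob_stab G K H (frob_circ G K H g m)" unfolding T_def by simp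
    then obtain h' s where hs: "h' \<in> H'" "s \<in> frob_stab G K H (frob_circ G K H g m)" "a = h' \<otimes> s"
      unfolding set_mult_def by blast
    have "s \<in> carrier G" using hs(2) unfolding frob_stab_def by simp
    hence "inv h' \<otimes> a = s" using hs Hc l_inv_assoc by auto
    hence "\<exists>h'. h' \<in> H' \<and> inv h' \<otimes> a \<in> frob_stab G K H (frob_circ G K H g m)" using hs by blast
    thus ?thesis unfolding f_def by (rule someI_ex)
  qed
  have inj: "inj_on f T"
  proof (rule inj_onI)
    fix m m' assume m: "m \<in> T" "m' \<in> T" and e: "f m = f m'"
    define s where "s = inv (f m) \<otimes> a"
    have hc: "f m \<in> carrier G" using fm[OF m(1)] Hc by auto
    have sc: "s \<in> carrier G" using hc a s_def by simp
    have s1: "s \<noteq> \<one>"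
    proof
      assume "s = \<one>"
      hence "a = f m \<otimes> \<one>" using inv_solve_left'[of \<one> "f m" a] hc a s_def by simp
      thus False using fm[OF m(1)] a hc by simp
    qed
    have mK: "m \<in> K" "m' \<in> K" using m unfolding T_def by auto
    have f1: "frob_circ G K H s (frob_circ G K H g m) = frob_circ G K H g m"
      using fm[OF m(1)] unfolding s_def frob_stab_def by simp
    have f2: "frob_circ G K H s (frob_circ G K H g m') = frob_circ G K H g m'"
      using fm[OF m(2)] e unfolding s_def frob_stab_def by simp
    have "frob_circ G K H g m = frob_circ G K H g m'"
      using fix_unique[OF sc s1 circ_K[OF g mK(1)] circ_K[OF g mK(2)] f1 f2] .
    thus "m = m'" using circ_inj[OF g mK] by simp
  qed
  have "f ` T \<subseteq> H'" using fm by auto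
  hence "card T \<le> card H'" using card_inj_on_le[OF inj _ FC_props(3)[OF H']] by blast
  thus ?thesis using FC_props(2)[OF H'] unfolding T_def by linarith
qed

lemma bad:
  assumes B: "B \<subseteq> K" and nb: "\<not> FC_strong_base G K H B"
  shows "\<exists>H'\<in>frob_FC G K H. \<exists>g\<in>carrier G. \<exists>a\<in>carrier G. a \<notin> H' \<and>
           B \<subseteq> {m \<in> K. a \<in> H' <#> frob_stab G K H (frob_circ G K H g m)}"
proof -
  define Q where "Q H' g = carrier G \<inter> (\<Inter>m\<in>B. H' <#> frob_stab G K H (frob_circ G K H g m))" for H' g
  have "\<not> (\<forall>H'\<in>frob_FC G K H. \<forall>g\<in>carrier G. Q H' g = H')"
    using nb unfolding FC_strong_base_def strong_base_def Q_def .
  then obtain H' g where H': "H' \<in> frob_FC G K H" and g: "g \<in> carrier G" and ne: "Q H' g \<noteq> H'"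
    by blast
  have Hc: "H' \<subseteq> carrier G" using FC_props H' by auto
  have sub: "H' \<subseteq> Q H' g"
  proof
    fix h assume h: "h \<in> H'"
    have "h \<in> H' <#> frob_stab G K H (frob_circ G K H g m)" if "m \<in> B" for m
    proof -
      have mK: "m \<in> K" using B that by (rule subsetD)
      have "\<one> \<in> frob_stab G K H (frob_circ G K H g m)" by (rule stab_one[OF circ_K[OF g mK]])
      moreover have "h = h \<otimes> \<one>" using h Hc by auto
      ultimately show ?thesis using h unfolding set_mult_def by blast
    qed
    hence "h \<in> (\<Inter>m\<in>B. H' <#> frob_stab G K H (frob_circ G K H g m))" by (rule INT_I)
    thus "h \<in> Q H' g" unfolding Q_def using h Hc by (simp add: subsetD)
  qed
  then obtain a where aQ: "a \<in> Q H' g" and a: "a \<notin> H'"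
    using ne by blast
  have ac: "a \<in> carrier G" using aQ unfolding Q_def by simp
  have Bs: "B \<subseteq> {m \<in> K. a \<in> H' <#> frob_stab G K H (frob_circ G K H g m)}"
  proof
    fix m assume m: "m \<in> B"
    have "a \<in> (\<Inter>m\<in>B. H' <#> frob_stab G K H (frob_circ G K H g m))" using aQ unfolding Q_def by simp
    hence "a \<in> H' <#> frob_stab G K H (frob_circ G K H g m)" using m by (rule INT_D)
    thus "m \<in> {m \<in> K. a \<in> H' <#> frob_stab G K H (frob_circ G K H g m)}" using m B by auto
  qed
  show ?thesis using H' g ac a Bs by blast
qed

definition orb where "orb k = (\<lambda>h. h \<otimes> k \<otimes> inv h) ` H"

lemma orb_sub: assumes "k \<in> K" "k \<noteq> \<one>" shows "orb k \<subseteq> K - {\<one>}"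
proof
  fix z assume "z \<in> orb k"
  then obtain h where h: "h \<in> H" "z = h \<otimes> k \<otimes> inv h" unfolding orb_def by blast
  have c: "h \<in> carrier G" "k \<in> carrier G" using h assms H_car K_car by auto
  have "z \<in> K" using normal.inv_op_closed2[OF Knorm c(1) assms(1)] h by simp
  moreover have "z \<noteq> \<one>"
  proof
    assume "z = \<one>"
    hence "h \<otimes> k = \<one> \<otimes> h" using inv_solve_right'[of \<one> "h \<otimes> k" h] c h by simp
    hence "k = \<one>" using c by simp
    thus False using assms by simp
  qed
  ultimately show "z \<in> K - {\<one>}" by simp
qed

lemma orb_self: "k \<in> carrier G \<Longrightarrow> k \<in> orb k"
  unfolding orb_def using one_H by (auto intro!: image_eqI[of _ _ \<one>])

lemma orb_card: assumes "k \<in> K" "k \<noteq> \<one>" shows "card (orb k) = card H"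
proof -
  have kc: "k \<in> carrier G" using assms K_car by auto
  have "inj_on (\<lambda>h. h \<otimes> k \<otimes> inv h) H"
  proof (rule inj_onI)
    fix h1 h2 assume h: "h1 \<in> H" "h2 \<in> H" and e: "h1 \<otimes> k \<otimes> inv h1 = h2 \<otimes> k \<otimes> inv h2"
    have c: "h1 \<in> carrier G" "h2 \<in> carrier G" using h H_car by auto
    define d where "d = inv h2 \<otimes> h1"
    have dH: "d \<in> H" using h unfolding d_def by (simp add: Hmul Hinv)
    have dc: "d \<in> carrier G" using c d_def by simp
    have "d \<otimes> k \<otimes> inv d = inv h2 \<otimes> (h1 \<otimes> k \<otimes> inv h1) \<otimes> h2"
      using c kc unfolding d_def by (simp add: inv_mult_group m_assoc)
    also have "\<dots> = inv h2 \<otimes> (h2 \<otimes> k \<otimes> inv h2) \<otimes> h2" using e by simp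
    also have "\<dots> = k" using c kc by (simp add: m_assoc l_inv_assoc)
    finally have "d \<otimes> k \<otimes> inv d = k" .
    hence comm: "d \<otimes> k = k \<otimes> d" using inv_solve_right'[of k "d \<otimes> k" d] dc kc by simp
    have "d = \<one>" using comm_false[OF dH assms(1) _ assms(2) comm] by blast
    hence "h1 = h2 \<otimes> \<one>" using inv_solve_left'[of \<one> h2 h1] c unfolding d_def by simp
    thus "h1 = h2" using c by simp
  qed
  thus ?thesis unfolding orb_def by (simp add: card_image)
qed

lemma orb_trans: assumes "k \<in> carrier G" "k' \<in> orb k" shows "orb k' \<subseteq> orb k"
proof
  obtain h0 where h0: "h0 \<in> H" "k' = h0 \<otimes> k \<otimes> inv h0" using assms unfolding orb_def by blast
  fix z assume "z \<in> orb k'"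
  then obtain h where h: "h \<in> H" "z = h \<otimes> k' \<otimes> inv h" unfolding orb_def by blast
  have c: "h0 \<in> carrier G" "h \<in> carrier G" using h h0 H_car by auto
  have "z = (h \<otimes> h0) \<otimes> k \<otimes> inv (h \<otimes> h0)" using h h0 c assms by (simp add: inv_mult_group m_assoc)
  moreover have "h \<otimes> h0 \<in> H" using h h0 by (simp add: Hmul)
  ultimately show "z \<in> orb k" unfolding orb_def by blast
qed

lemma orb_sym: assumes "k \<in> carrier G" "k' \<in> orb k" shows "k \<in> orb k'"
proof -
  obtain h0 where h0: "h0 \<in> H" "k' = h0 \<otimes> k \<otimes> inv h0" using assms unfolding orb_def by blast
  have c: "h0 \<in> carrier G" using h0 H_car by auto
  have "k = inv h0 \<otimes> k' \<otimes> inv (inv h0)" using h0 c assms by (simp add: m_assoc l_inv_assoc)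
  moreover have "inv h0 \<in> H" using h0 by (simp add: Hinv)
  ultimately show ?thesis unfolding orb_def by blast
qed

lemma orb_carrier: "k \<in> carrier G \<Longrightarrow> orb k \<subseteq> carrier G"
  unfolding orb_def using H_car by auto

lemma orb_eq: assumes "k \<in> carrier G" "k' \<in> carrier G" "z \<in> orb k" "z \<in> orb k'"
  shows "orb k = orb k'"
proof -
  have zc: "z \<in> carrier G" using orb_carrier[OF assms(1)] assms(3) by (rule subsetD)
  have "orb k = orb z"
    by (rule subset_antisym[OF orb_trans[OF zc orb_sym[OF assms(1,3)]] orb_trans[OF assms(1,3)]])
  moreover have "orb k' = orb z"
    by (rule subset_antisym[OF orb_trans[OF zc orb_sym[OF assms(2,4)]] orb_trans[OF assms(2,4)]])
  ultimately show ?thesis by simp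
qed

lemma H_dvd: "card H * card (orb ` (K - {\<one>})) = card K - 1"
proof -
  let ?C = "orb ` (K - {\<one>})"
  have U: "\<Union> ?C = K - {\<one>}"
  proof
    show "\<Union> ?C \<subseteq> K - {\<one>}"
    proof
      fix z assume "z \<in> \<Union> ?C"
      then obtain k where k: "k \<in> K - {\<one>}" "z \<in> orb k" by auto
      show "z \<in> K - {\<one>}" using orb_sub[of k] k by auto
    qed
    show "K - {\<one>} \<subseteq> \<Union> ?C"
    proof
      fix k assume k: "k \<in> K - {\<one>}"
      have "k \<in> orb k" using k K_car orb_self by auto
      thus "k \<in> \<Union> ?C" using k by auto
    qed
  qed
  have "card H * card ?C = card (\<Union> ?C)"
  proof (rule card_partition)
    show "finite ?C" using finK by simp
    show "finite (\<Union> ?C)" using U finK by simp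
    show "card c = card H" if cC: "c \<in> ?C" for c
    proof -
      obtain k where "k \<in> K - {\<one>}" "c = orb k" using cC by blast
      thus ?thesis using orb_card by auto
    qed
    show "c1 \<inter> c2 = {}" if c: "c1 \<in> ?C" "c2 \<in> ?C" "c1 \<noteq> c2" for c1 c2
    proof (rule ccontr)
      assume "c1 \<inter> c2 \<noteq> {}"
      then obtain z where z: "z \<in> c1" "z \<in> c2" by auto
      obtain k1 where k1: "k1 \<in> K - {\<one>}" "c1 = orb k1" using c by auto
      obtain k2 where k2: "k2 \<in> K - {\<one>}" "c2 = orb k2" using c by auto
      have "orb k1 = orb k2" using orb_eq[of k1 k2 z] k1 k2 z K_car by auto
      thus False using c k1 k2 by simp
    qed
  qed
  also have "\<dots> = card K - 1" using U one_K finK by simp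
  finally show ?thesis .
qed

lemma carrier_card: "card (carrier G) \<le> card K * card H"
proof -
  have "carrier G = (\<lambda>(y,h). y \<otimes> h) ` (K \<times> H)" using KH[symmetric] unfolding set_mult_def by auto
  hence "card (carrier G) \<le> card (K \<times> H)" by (metis card_image_le finK finH finite_cartesian_product)
  thus ?thesis by (simp add: card_cartesian_product)
qed

lemma small_K: assumes "card K < 2" "H' \<in> frob_FC G K H" "a \<in> carrier G" shows "a \<in> H'"
proof -
  have "card K \<le> Suc 0" using assms(1) by simp
  hence "\<forall>a\<in>K. \<forall>b\<in>K. a = b" using card_le_Suc0_iff_eq[OF finK] by simp
  hence K1: "K = {\<one>}" using one_K by blast
  obtain x where x: "x \<in> K" "H' = (\<lambda>h. x \<otimes> h \<otimes> inv x) ` H"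
    using assms unfolding frob_FC_def by blast
  have "x = \<one>" using x K1 by simp
  hence "H' = H" using x H_car by (auto simp: image_iff)
  moreover have "carrier G = H" using KH K1 H_car unfolding set_mult_def by auto
  ultimately show ?thesis using assms by simp
qed

lemma main:
  assumes Hne: "int (card H) \<noteq> int (card K) - 1" and e: "0 < \<epsilon>" "\<epsilon> \<le> 1/2"
    and l: "40 * ln (real (card K)) * ln (1/\<epsilon>) \<le> real l"
  shows "real (card {B. B \<subseteq> K \<and> card B = l \<and> FC_strong_base G K H B}) \<ge> (1 - \<epsilon>) * real (card K choose l)"
proof -
  define S where "S = {B. B \<subseteq> K \<and> card B = l}"
  define Good where "Good = {B. B \<subseteq> K \<and> card B = l \<and> FC_strong_base G K H B}"
  define Tf where "Tf = (\<lambda>(H', g, a). {m \<in> K. a \<in> H' <#> frob_stab G K H (frob_circ G K H g m)})"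
  define I where "I = {(H', g, a). H' \<in> frob_FC G K H \<and> g \<in> carrier G \<and> a \<in> carrier G \<and> a \<notin> H'}"
  have GS: "Good \<subseteq> S" unfolding Good_def S_def by auto
  have finS: "finite S" unfolding S_def using finK by simp
  have cardS: "card S = card K choose l" unfolding S_def using n_subsets[OF finK] by simp
  have finGood: "finite Good" using finite_subset[OF GS finS] .
  have cG: "card Good + card (S - Good) = card S"
    using card_Diff_subset[OF finGood GS] card_mono[OF finS GS] by simp
  have badsub: "S - Good \<subseteq> (\<Union>i\<in>I. {B. B \<subseteq> Tf i \<and> card B = l})"
  proof
    fix B assume B: "B \<in> S - Good"
    hence BK: "B \<subseteq> K" and Bl: "card B = l" and nb: "\<not> FC_strong_base G K H B"
      unfolding S_def Good_def by auto
    obtain H' g a where H': "H' \<in> frob_FC G K H" and g: "g \<in> carrier G" and a: "a \<in> carrier G" "a \<notin> H'"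
      and Bs: "B \<subseteq> {m \<in> K. a \<in> H' <#> frob_stab G K H (frob_circ G K H g m)}"
      using bad[OF BK nb] by blast
    have "(H', g, a) \<in> I" unfolding I_def using H' g a by simp
    moreover have "B \<in> {B. B \<subseteq> Tf (H', g, a) \<and> card B = l}" unfolding Tf_def using Bs Bl by simp
    ultimately show "B \<in> (\<Union>i\<in>I. {B. B \<subseteq> Tf i \<and> card B = l})" by blast
  qed
  show ?thesis
  proof (cases "card K < 2")
    case True
    have "I = {}" unfolding I_def using small_K[OF True] by auto
    hence "S - Good = {}" using badsub by simp
    hence "card (S - Good) = 0" by (simp only: card.empty)
    hence "card Good = card S" using cG by simp
    moreover have "(1 - \<epsilon>) * real (card K choose l) \<le> real (card K choose l)"
      by (rule mult_left_le_one_le) (use e in auto)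
    ultimately show ?thesis unfolding Good_def[symmetric] using cardS by simp
  next
    case False
    hence K2: "card K \<ge> 2" by simp
    have finFC: "finite (frob_FC G K H)"
    proof -
      have "frob_FC G K H = (\<lambda>x. (\<lambda>h. x \<otimes> h \<otimes> inv x) ` H) ` K" unfolding frob_FC_def by auto
      thus ?thesis using finK by simp
    qed
    have cFC: "card (frob_FC G K H) \<le> card K"
    proof -
      have "frob_FC G K H = (\<lambda>x. (\<lambda>h. x \<otimes> h \<otimes> inv x) ` H) ` K" unfolding frob_FC_def by auto
      thus ?thesis using card_image_le[OF finK] by metis
    qed
    have Isub: "I \<subseteq> frob_FC G K H \<times> (carrier G \<times> carrier G)" unfolding I_def by auto
    have finI: "finite I" using finite_subset[OF Isub] finFC fin by simp
    have cI: "card I \<le> card K * (card (carrier G) * card (carrier G))"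
    proof -
      have "card I \<le> card (frob_FC G K H \<times> (carrier G \<times> carrier G))"
        using card_mono[OF _ Isub] finFC fin by simp
      also have "\<dots> = card (frob_FC G K H) * (card (carrier G) * card (carrier G))"
        by (simp add: card_cartesian_product)
      also have "\<dots> \<le> card K * (card (carrier G) * card (carrier G))" using cFC by simp
      finally show ?thesis .
    qed
    have each: "card {B. B \<subseteq> Tf i \<and> card B = l} \<le> card H choose l" if i: "i \<in> I" for i
    proof -
      obtain H' g a where ia: "i = (H', g, a)" by (cases i) auto
      have H': "H' \<in> frob_FC G K H" "g \<in> carrier G" "a \<in> carrier G" "a \<notin> H'"
        using i unfolding ia I_def by auto
      have finT: "finite (Tf i)" unfolding ia Tf_def using finK by simp
      have "card {B. B \<subseteq> Tf i \<and> card B = l} = card (Tf i) choose l" using n_subsets[OF finT] .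
      also have "\<dots> \<le> card H choose l"
        using binomial_right_mono T_card[OF H'] unfolding ia Tf_def by simp
      finally show ?thesis .
    qed
    have finU: "finite {B. B \<subseteq> Tf i \<and> card B = l}" for i
    proof -
      obtain H' g a where ia: "i = (H', g, a)" by (cases i) auto
      have finT: "finite (Tf i)" unfolding ia Tf_def using finK by simp
      have "{B. B \<subseteq> Tf i \<and> card B = l} \<subseteq> Pow (Tf i)" by auto
      thus ?thesis using finT finite_subset by blast
    qed
    have "card (S - Good) \<le> card (\<Union>i\<in>I. {B. B \<subseteq> Tf i \<and> card B = l})"
      using card_mono[OF _ badsub] finI finU by simp
    also have "\<dots> \<le> (\<Sum>i\<in>I. card {B. B \<subseteq> Tf i \<and> card B = l})" by (rule card_UN_le[OF finI])
    also have "\<dots> \<le> card I * (card H choose l)" using sum_bounded_above[of I _ "card H choose l"] each by simp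
    also have "\<dots> \<le> card K * (card (carrier G) * card (carrier G)) * (card H choose l)"
      using cI by (simp add: mult_right_mono)
    finally have cBad: "card (S - Good) \<le> card K * (card (carrier G) * card (carrier G)) * (card H choose l)" .
    have d: "card H * card (orb ` (K - {\<one>})) = card K - 1" by (rule H_dvd)
    have Hpos: "card H \<ge> 1" using finH one_H by (metis card_0_eq empty_iff less_one not_le)
    have neq: "card H \<noteq> card K - 1" using Hne K2 by linarith
    have "card (orb ` (K - {\<one>})) \<noteq> 0"
    proof
      assume "card (orb ` (K - {\<one>})) = 0"
      hence "card K - 1 = 0" using d by simp
      thus False using K2 by simp
    qed
    moreover have "card (orb ` (K - {\<one>})) \<noteq> 1" using d neq by auto
    ultimately have "card (orb ` (K - {\<one>})) \<ge> 2" by linarith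
    hence "card H * 2 \<le> card K - 1" using d by (metis mult_le_mono2)
    hence H2: "2 * card H \<le> card K" by linarith
    have bh: "2 ^ l * (card H choose l) \<le> card K choose l" by (rule binom_half[OF H2])
    have "card K * card H \<le> card K * card K" using H2 by (intro mult_le_mono2) linarith
    hence cGK: "card (carrier G) \<le> card K * card K" using carrier_card by linarith
    have "card K * (card (carrier G) * card (carrier G)) \<le> card K * ((card K * card K) * (card K * card K))"
      using cGK by (simp add: mult_le_mono)
    also have "\<dots> = card K ^ 5" by (simp add: eval_nat_numeral mult.assoc)
    finally have k5: "card K * (card (carrier G) * card (carrier G)) \<le> card K ^ 5" .
    have cB2: "card (S - Good) \<le> card K ^ 5 * (card H choose l)"
      by (rule le_trans[OF cBad mult_le_mono1[OF k5]])
    have fi: "real (card K) ^ 5 \<le> \<epsilon> * 2 ^ l" by (rule final_ineq[OF K2 e l])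
    have r1: "real (card (S - Good)) \<le> real (card K) ^ 5 * real (card H choose l)"
    proof -
      have "real (card (S - Good)) \<le> real (card K ^ 5 * (card H choose l))"
        using cB2 by (simp only: of_nat_le_iff)
      thus ?thesis by simp
    qed
    have r2: "real (card H choose l) * 2 ^ l \<le> real (card K choose l)"
    proof -
      have "real (2 ^ l * (card H choose l)) \<le> real (card K choose l)"
        using bh by (simp only: of_nat_le_iff)
      thus ?thesis by (simp add: mult.commute)
    qed
    have "real (card (S - Good)) * 2 ^ l \<le> real (card K) ^ 5 * real (card H choose l) * 2 ^ l"
      using r1 by (simp add: mult_right_mono)
    also have "\<dots> = real (card K) ^ 5 * (real (card H choose l) * 2 ^ l)" by (simp add: mult.assoc)
    also have "\<dots> \<le> real (card K) ^ 5 * real (card K choose l)"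
      using r2 by (simp add: mult_left_mono)
    also have "\<dots> \<le> \<epsilon> * 2 ^ l * real (card K choose l)" using fi by (simp add: mult_right_mono)
    finally have "real (card (S - Good)) * 2 ^ l \<le> (\<epsilon> * real (card K choose l)) * 2 ^ l" by (simp add: mult_ac)
    hence bad_e: "real (card (S - Good)) \<le> \<epsilon> * real (card K choose l)" by simp
    have "real (card Good) + real (card (S - Good)) = real (card K choose l)"
      using arg_cong[OF cG, of real] cardS by simp
    hence "real (card Good) \<ge> (1 - \<epsilon>) * real (card K choose l)" using bad_e by (simp add: algebra_simps)
    thus ?thesis unfolding Good_def .
  qed
qed

end

theorem proposition3:
  shows "\<exists>c::real. c > 0 \<and>
    (\<forall>(G::('g, 'm) monoid_scheme) (E::'e set) \<phi> \<omega> K H (\<epsilon>::real) (l::nat).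
       frobenius_action G E \<phi> \<and> \<omega> \<in> E \<and>
       H = stabilizer G \<phi> \<omega> \<and> K = frobenius_kernel G E \<phi> \<and>
       K \<lhd> G \<and> K \<inter> H = {\<one>\<^bsub>G\<^esub>} \<and> K <#>\<^bsub>G\<^esub> H = carrier G \<and>
       int (card H) \<noteq> int (card K) - 1 \<and>
       0 < \<epsilon> \<and> \<epsilon> \<le> 1/2 \<and>
       c * ln (real (card K)) * ln (1 / \<epsilon>) \<le> real l \<and> l \<le> card K
       \<longrightarrow> real (card {B. B \<subseteq> K \<and> card B = l \<and> FC_strong_base G K H B})
             \<ge> (1 - \<epsilon>) * real (card K choose l))"
proof (intro exI[of _ 40] conjI allI impI)
  show "(40::real) > 0" by simp
  fix G :: "('g, 'm) monoid_scheme" and E :: "'e set" and \<phi> \<omega> K H and \<epsilon> :: real and l :: nat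
  assume A: "frobenius_action G E \<phi> \<and> \<omega> \<in> E \<and>
       H = stabilizer G \<phi> \<omega> \<and> K = frobenius_kernel G E \<phi> \<and>
       K \<lhd> G \<and> K \<inter> H = {\<one>\<^bsub>G\<^esub>} \<and> K <#>\<^bsub>G\<^esub> H = carrier G \<and>
       int (card H) \<noteq> int (card K) - 1 \<and>
       0 < \<epsilon> \<and> \<epsilon> \<le> 1/2 \<and>
       40 * ln (real (card K)) * ln (1 / \<epsilon>) \<le> real l \<and> l \<le> card K"
  have fa: "frobenius_action G E \<phi>" using A by blast
  have grp: "group G" using fa unfolding frobenius_action_def by blast
  have ta: "transitive_action G E \<phi>" using fa unfolding frobenius_action_def by blast
  have ga: "group_action G E \<phi>" using ta unfolding transitive_action_def by blast
  interpret frob G E \<phi> \<omega> K H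
  proof (intro frob.intro[OF grp] frob_axioms.intro)
    show "finite (carrier G)" using fa unfolding frobenius_action_def by blast
    show "finite E" using fa unfolding frobenius_action_def by blast
    show "group_action G E \<phi>" by (rule ga)
    show "\<omega> \<in> E" using A by blast
    show "H = stabilizer G \<phi> \<omega>" using A by blast
    show "K = frobenius_kernel G E \<phi>" using A by blast
    show "K \<lhd> G" using A by blast
    show "K \<inter> H = {\<one>\<^bsub>G\<^esub>}" using A by blast
    show "K <#>\<^bsub>G\<^esub> H = carrier G" using A by blast
    show "\<forall>g\<in>carrier G. g \<noteq> \<one>\<^bsub>G\<^esub> \<longrightarrow> card (invariants E \<phi> g) \<le> 1"
      using fa unfolding frobenius_action_def by blast
  qed
  show "real (card {B. B \<subseteq> K \<and> card B = l \<and> FC_strong_base G K H B}) \<ge> (1 - \<epsilon>) * real (card K choose l)"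
    using main A by blast
qed

end
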